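(* For every integer $N\ge 0$, let $T_{2\times 3}(7,N)$ be the number of tilings of a $7\times n$ rectangle, $n=6N/7$, by $N$ tiles of size $2\times 3$ (and $0$ if $6N/7\notin\mathbb{Z}$). Then, as formal power series, \[ \sum_{N\ge 0} T_{2\times 3}(7,N)\,z^N=\frac{1}{1-3z^7}. \]
   Context: A tiling of an $m\times n$ rectangle (width $m$, length $n$, made of $mn$ unit squares) by $a\times b$ tiles is a partition of the rectangle into non-overlapping axis-parallel $a\times b$ rectangles with integer corner coordinates, each placed in either of its two orientations. Tilings related by reflections or rotations of the rectangle are counted as distinct. The empty tiling counts once for $N=0$. *)

theory Defs
  imports Main "HOL-Computational_Algebra.Formal_Power_Series"
begin

text \<open>The axis-parallel w-by-h block of unit cells with lower-left corner (x,y);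
  the cell (i,j) is the unit square [i,i+1] x [j,j+1].\<close>
definition block :: "nat \<Rightarrow> nat \<Rightarrow> nat \<Rightarrow> nat \<Rightarrow> (nat \<times> nat) set" where
  "block x y w h = {x..<x+w} \<times> {y..<y+h}"

definition placements :: "nat \<Rightarrow> nat \<Rightarrow> (nat \<times> nat) set set" where
  "placements a b = {block x y a b | x y. True} \<union> {block x y b a | x y. True}"

definition is_tiling :: "nat \<Rightarrow> nat \<Rightarrow> nat \<Rightarrow> nat \<Rightarrow> (nat \<times> nat) set set \<Rightarrow> bool" where
  "is_tiling a b m n S \<longleftrightarrow>
     S \<subseteq> placements a b \<and> pairwise disjnt S \<and> \<Union>S = {0..<m} \<times> {0..<n}"

definition num_tilings :: "nat \<Rightarrow> nat \<Rightarrow> nat \<Rightarrow> nat \<Rightarrow> nat \<Rightarrow> nat" where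
  "num_tilings a b m n N = card {S. is_tiling a b m n S \<and> card S = N}"

definition T23_7 :: "nat \<Rightarrow> nat" where
  "T23_7 N = (if 7 dvd 6 * N then num_tilings 2 3 7 (6 * N div 7) N else 0)"

end

theory Submission
  imports Defs
begin


definition tilings :: "(nat\<times>nat) set \<Rightarrow> (nat\<times>nat) set set set" where
  "tilings R = {S. S \<subseteq> placements 2 3 \<and> pairwise disjnt S \<and> \<Union>S = R}"

lemma block_ne: "w > 0 \<Longrightarrow> h > 0 \<Longrightarrow> block x y w h \<noteq> {}"
  by (auto simp: block_def)

lemma placements_ne: "t \<in> placements 2 3 \<Longrightarrow> t \<noteq> {}"
proof -
  assume "t \<in> placements 2 3"
  then obtain x y where "t = block x y 2 3 \<or> t = block x y 3 2" unfolding placements_def by blast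
  then show ?thesis by (metis block_ne zero_less_numeral)
qed

lemma tilings_finite: "finite R \<Longrightarrow> finite (tilings R)"
  apply (rule finite_subset[of _ "Pow (Pow R)"])
  by (auto simp: tilings_def)

lemma tilings_empty: "tilings {} = {{}}"
  using placements_ne by (auto simp: tilings_def)

lemma tilings_insert:
  assumes "S' \<in> tilings (R - B)" "B \<subseteq> R" "B \<in> placements 2 3"
  shows "insert B S' \<in> tilings R"
  using assms unfolding tilings_def
  by (auto simp: pairwise_insert disjnt_def)

lemma tilings_remove:
  assumes "S \<in> tilings R" "B \<in> S"
  shows "S - {B} \<in> tilings (R - B)"
proof -
  have "\<And>u. u \<in> S \<Longrightarrow> u \<noteq> B \<Longrightarrow> u \<inter> B = {}"
    using assms unfolding tilings_def pairwise_def disjnt_def by blast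
  then show ?thesis using assms unfolding tilings_def
    by (auto simp: pairwise_def)
qed

lemma tilings_split:
  assumes ab: "(a,b) \<in> R" and mn: "\<forall>(i,j)\<in>R. b < j \<or> (b = j \<and> a \<le> i)" and fin: "finite R"
  shows "card (tilings R) =
     (if block a b 2 3 \<subseteq> R then card (tilings (R - block a b 2 3)) else 0) +
     (if block a b 3 2 \<subseteq> R then card (tilings (R - block a b 3 2)) else 0)"
proof -
  define B1 where "B1 = block a b 2 3"
  define B2 where "B2 = block a b 3 2"
  define A1 where "A1 = (if B1 \<subseteq> R then insert B1 ` tilings (R - B1) else {})"
  define A2 where "A2 = (if B2 \<subseteq> R then insert B2 ` tilings (R - B2) else {})"
  have B1p: "B1 \<in> placements 2 3" unfolding B1_def placements_def by auto
  have B2p: "B2 \<in> placements 2 3" unfolding B2_def placements_def by auto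
  have ab1: "(a,b) \<in> B1" and ab2: "(a,b) \<in> B2" by (auto simp: B1_def B2_def block_def)
  have "(a+2,b) \<in> B2" "(a+2,b) \<notin> B1" unfolding B1_def B2_def block_def by simp_all
  then have B12: "B1 \<noteq> B2" by blast
  have key: "\<exists>t\<in>S. t \<subseteq> R \<and> (t = B1 \<or> t = B2)" if S: "S \<in> tilings R" for S
  proof -
    from S ab obtain t where t: "t \<in> S" "(a,b) \<in> t" unfolding tilings_def by blast
    have tR: "t \<subseteq> R" using S t unfolding tilings_def by blast
    from t S obtain x y where "t = block x y 2 3 \<or> t = block x y 3 2"
      unfolding tilings_def placements_def by blast
    then show ?thesis
    proof
      assume tb: "t = block x y 2 3"
      have "(x,y) \<in> R" using tR tb by (auto simp: block_def)
      with mn have "b < y \<or> (b = y \<and> a \<le> x)" by blast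
      moreover have "x \<le> a" "y \<le> b" using t(2) tb by (auto simp: block_def)
      ultimately have "x = a" "y = b" by auto
      then show ?thesis using t tR tb B1_def by auto
    next
      assume tb: "t = block x y 3 2"
      have "(x,y) \<in> R" using tR tb by (auto simp: block_def)
      with mn have "b < y \<or> (b = y \<and> a \<le> x)" by blast
      moreover have "x \<le> a" "y \<le> b" using t(2) tb by (auto simp: block_def)
      ultimately have "x = a" "y = b" by auto
      then show ?thesis using t tR tb B2_def by auto
    qed
  qed
  have eq: "tilings R = A1 \<union> A2"
  proof
    show "tilings R \<subseteq> A1 \<union> A2"
    proof
      fix S assume S: "S \<in> tilings R"
      from key[OF S] obtain t where t: "t \<in> S" "t \<subseteq> R" "t = B1 \<or> t = B2" by blast
      have "S = insert t (S - {t})" using t by auto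
      moreover have "S - {t} \<in> tilings (R - t)" using tilings_remove[OF S t(1)] .
      ultimately have "S \<in> insert t ` tilings (R - t)" by blast
      then show "S \<in> A1 \<union> A2" using t(2,3) unfolding A1_def A2_def by auto
    qed
    have "A1 \<subseteq> tilings R"
      unfolding A1_def using tilings_insert[OF _ _ B1p] by auto
    moreover have "A2 \<subseteq> tilings R"
      unfolding A2_def using tilings_insert[OF _ _ B2p] by auto
    ultimately show "A1 \<union> A2 \<subseteq> tilings R" by blast
  qed
  have nin: "B \<notin> S'" if "S' \<in> tilings (R - B)" "B \<in> placements 2 3" for S' B
  proof
    assume "B \<in> S'"
    then have "B \<subseteq> R - B" using that unfolding tilings_def by blast
    then show False using placements_ne[OF that(2)] by blast
  qed
  have inj: "inj_on (insert B) (tilings (R - B))" if "B \<in> placements 2 3" for B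
    unfolding inj_on_def using nin[OF _ that]
    by (metis insert_ident)
  have disj: "A1 \<inter> A2 = {}"
  proof (rule ccontr)
    assume "A1 \<inter> A2 \<noteq> {}"
    then obtain S1 S2 where S1: "S1 \<in> tilings (R - B1)" and S2: "S2 \<in> tilings (R - B2)"
      and e: "insert B1 S1 = insert B2 S2"
      unfolding A1_def A2_def by (auto split: if_splits)
    then have "B2 \<in> S1" using B12 by blast
    then have "B2 \<subseteq> R - B1" using S1 unfolding tilings_def by blast
    then show False using ab1 ab2 by blast
  qed
  have f1: "finite (tilings (R - B))" for B using tilings_finite fin by auto
  have cA1: "card A1 = (if B1 \<subseteq> R then card (tilings (R - B1)) else 0)"
    unfolding A1_def using card_image[OF inj[OF B1p]] by auto
  have cA2: "card A2 = (if B2 \<subseteq> R then card (tilings (R - B2)) else 0)"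
    unfolding A2_def using card_image[OF inj[OF B2p]] by auto
  have "finite A1" "finite A2" unfolding A1_def A2_def using f1 by auto
  then have "card (tilings R) = card A1 + card A2"
    unfolding eq using card_Un_disjoint disj by blast
  then show ?thesis using cA1 cA2 B1_def B2_def by simp
qed



definition sky :: "nat \<Rightarrow> nat \<Rightarrow> nat list \<Rightarrow> (nat\<times>nat) set" where
  "sky y n p = {(i,j). i < length p \<and> y + p!i \<le> j \<and> j < n}"

definition F :: "nat \<Rightarrow> nat \<Rightarrow> nat list \<Rightarrow> nat" where
  "F y n p = card (tilings (sky y n p))"

fun lmin :: "nat list \<Rightarrow> nat" where
  "lmin [] = 0"
| "lmin (x#xs) = (if xs = [] then x else min x (lmin xs))"

fun idx :: "nat list \<Rightarrow> nat \<Rightarrow> nat" where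
  "idx [] m = 0"
| "idx (x#xs) m = (if x = m then 0 else Suc (idx xs m))"

definition fits :: "nat \<Rightarrow> nat \<Rightarrow> nat \<Rightarrow> nat list \<Rightarrow> bool" where
  "fits i m w p = (i + w \<le> length p \<and> list_all (\<lambda>c. p!c \<le> m) [i..<i+w])"

definition upd :: "nat list \<Rightarrow> nat \<Rightarrow> nat \<Rightarrow> nat \<Rightarrow> nat list" where
  "upd p i w v = map (\<lambda>c. if i \<le> c \<and> c < i+w then v else p!c) [0..<length p]"

lemma upd_nth: "c < length p \<Longrightarrow> upd p i w v ! c = (if i \<le> c \<and> c < i+w then v else p!c)"
  unfolding upd_def by (simp del: upt_Suc)

lemma upd_len: "length (upd p i w v) = length p"
  unfolding upd_def by simp

lemma lmin_in: "p \<noteq> [] \<Longrightarrow> lmin p \<in> set p"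
  by (induction p) (auto simp: min_def)

lemma lmin_le: "x \<in> set p \<Longrightarrow> lmin p \<le> x"
  by (induction p) (auto simp: min_def)

lemma idx_props: "m \<in> set p \<Longrightarrow> idx p m < length p \<and> p ! idx p m = m \<and> (\<forall>c<idx p m. p!c \<noteq> m)"
proof (induction p)
  case Nil then show ?case by simp
next
  case (Cons x xs)
  show ?case
  proof (cases "x = m")
    case True then show ?thesis by simp
  next
    case False
    then have "m \<in> set xs" using Cons.prems by simp
    with Cons.IH False show ?thesis by (auto simp: less_Suc_eq_0_disj)
  qed
qed

lemma sky_finite: "finite (sky y n p)"
  by (rule finite_subset[of _ "{0..<length p} \<times> {0..<n}"]) (auto simp: sky_def)

lemma F_empty: "\<forall>x\<in>set p. n \<le> y + x \<Longrightarrow> F y n p = 1"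
proof -
  assume a: "\<forall>x\<in>set p. n \<le> y + x"
  have "sky y n p = {}" using a nth_mem by (fastforce simp: sky_def)
  then show ?thesis by (simp add: F_def tilings_empty)
qed

lemma sky_shift: "sky y n (map (\<lambda>x. x + d) p) = sky (y + d) n p"
  by (auto simp: sky_def add.assoc)

lemma block_sub:
  assumes m: "\<forall>x\<in>set p. m \<le> x" and h: "h > 0" and w: "w > 0"
  shows "block i (y+m) w h \<subseteq> sky y n p \<longleftrightarrow> fits i m w p \<and> y+m+h \<le> n"
proof
  assume s: "block i (y+m) w h \<subseteq> sky y n p"
  have "(i+w-1, y+m) \<in> block i (y+m) w h" using w h by (auto simp: block_def)
  then have "i + w - 1 < length p" using s by (auto simp: sky_def)
  then have l: "i + w \<le> length p" using w by simp
  have "(i, y+m+h-1) \<in> block i (y+m) w h" using w h by (auto simp: block_def)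
  then have "y+m+h \<le> n" using s h by (auto simp: sky_def)
  moreover have "\<forall>c\<in>{i..<i+w}. p!c \<le> m"
  proof
    fix c assume c: "c \<in> {i..<i+w}"
    then have "(c, y+m) \<in> block i (y+m) w h" using h by (auto simp: block_def)
    then show "p!c \<le> m" using s by (auto simp: sky_def)
  qed
  ultimately show "fits i m w p \<and> y+m+h \<le> n" using l by (simp add: fits_def list_all_iff)
next
  assume a: "fits i m w p \<and> y+m+h \<le> n"
  then show "block i (y+m) w h \<subseteq> sky y n p"
    by (auto simp: fits_def list_all_iff block_def sky_def)
qed

lemma sky_minus:
  assumes m: "\<forall>x\<in>set p. m \<le> x" and f: "fits i m w p"
  shows "sky y n p - block i (y+m) w h = sky y n (upd p i w (m+h))"
proof -
  have pc: "p!c = m" if "i \<le> c" "c < i + w" for c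
  proof -
    have "c < length p" using f that by (simp add: fits_def)
    then have "m \<le> p!c" using m nth_mem by blast
    moreover have "p!c \<le> m" using f that by (auto simp: fits_def list_all_iff)
    ultimately show ?thesis by simp
  qed
  have l: "i + w \<le> length p" using f by (simp add: fits_def)
  show ?thesis
    unfolding sky_def block_def using pc l
    by (auto simp: upd_nth upd_len split: if_splits)
qed

lemma F_step:
  assumes ne: "p \<noteq> []" and lt: "lmin p < 6" and yn: "y + 6 \<le> n"
  shows "F y n p = (let m = lmin p; i = idx p m in
     (if fits i m 2 p \<and> y+m+3 \<le> n then F y n (upd p i 2 (m+3)) else 0) +
     (if fits i m 3 p \<and> y+m+2 \<le> n then F y n (upd p i 3 (m+2)) else 0))"
proof -
  define m where "m = lmin p"
  define i where "i = idx p m"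
  have mall: "\<forall>x\<in>set p. m \<le> x" using lmin_le m_def by auto
  have ip: "i < length p" "p!i = m" "\<forall>c<i. p!c \<noteq> m"
    using idx_props[OF lmin_in[OF ne]] unfolding m_def i_def by auto
  have ab: "(i, y+m) \<in> sky y n p" using ip lt yn m_def by (auto simp: sky_def)
  have mn: "\<forall>(c,j)\<in>sky y n p. y+m < j \<or> (y+m = j \<and> i \<le> c)"
  proof -
    { fix c j assume cj: "(c,j) \<in> sky y n p"
      have "y+m < j \<or> (y+m = j \<and> i \<le> c)"
      proof (cases "y + m < j")
        case True then show ?thesis by simp
      next
        case n1: False
        have c: "c < length p" "y + p!c \<le> j" using cj by (auto simp: sky_def)
        have "m \<le> p!c" using mall c(1) by auto
        then have "j = y + m" "p!c = m" using c n1 by auto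
        then show ?thesis using ip(3) not_le by blast
      qed }
    then show ?thesis by blast
  qed
  have "F y n p =
     (if block i (y+m) 2 3 \<subseteq> sky y n p then card (tilings (sky y n p - block i (y+m) 2 3)) else 0) +
     (if block i (y+m) 3 2 \<subseteq> sky y n p then card (tilings (sky y n p - block i (y+m) 3 2)) else 0)"
    unfolding F_def by (rule tilings_split[OF ab mn sky_finite])
  also have "\<dots> = (if fits i m 2 p \<and> y+m+3 \<le> n then F y n (upd p i 2 (m+3)) else 0) +
     (if fits i m 3 p \<and> y+m+2 \<le> n then F y n (upd p i 3 (m+2)) else 0)"
    using block_sub[OF mall] sky_minus[OF mall] by (simp add: F_def)
  finally show ?thesis unfolding Let_def m_def i_def .
qed

lemma flat_step:
  assumes "n = y + 6 \<or> y + 12 \<le> n"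
  shows "F y n [0,0,0,0,0,0,0] = 3 * F (y+6) n [0,0,0,0,0,0,0]"
proof -
  have yn: "y + 6 \<le> n" using assms by auto
  have fl: "F y n [a1,a2,a3,a4,a5,a6,a7] = F (y+6) n [0,0,0,0,0,0,0]"
    if "a1 = 6" "a2 = 6" "a3 = 6" "a4 = 6" "a5 = 6" "a6 = 6" "a7 = 6" for a1 a2 a3 a4 a5 a6 a7 n
    using sky_shift[of y n 6 "[0,0,0,0,0,0,0]"] that by (simp add: F_def)
  from assms show ?thesis
  proof
    assume "n = y + 6"
    then show ?thesis
      by (simp add: F_step fl fits_def upd_def upt_rec Let_def)
  next
    assume "y + 12 \<le> n"
    then show ?thesis
      by (simp add: F_step fl fits_def upd_def upt_rec Let_def)
  qed
qed



lemma flat_pow: "F y (y + 6*k) [0,0,0,0,0,0,0] = 3^k"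
proof (induction k arbitrary: y)
  case 0 then show ?case by (simp add: F_empty)
next
  case (Suc k)
  have h: "y + 6 * Suc k = y + 6 \<or> y + 12 \<le> y + 6 * Suc k" by (cases k) auto
  have "F y (y + 6 * Suc k) [0,0,0,0,0,0,0] = 3 * F (y+6) (y + 6 * Suc k) [0,0,0,0,0,0,0]"
    by (rule flat_step[OF h])
  also have "y + 6 * Suc k = (y + 6) + 6 * k" by simp
  finally show ?case using Suc.IH[of "y+6"] by (simp add: ac_simps)
qed

lemma rect_sky: "{0..<7} \<times> {0..<n} = sky 0 n [0,0,0,0,0,0,0]"
proof -
  have "[0,0,0,0,0,0,0] = replicate 7 (0::nat)" by (simp add: numeral_eq_Suc)
  then show ?thesis by (auto simp: sky_def)
qed

lemma block_card: "t \<in> placements 2 3 \<Longrightarrow> finite t \<and> card t = 6"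
  by (auto simp: placements_def block_def)

lemma tiling_card:
  assumes S: "S \<in> tilings R" and fin: "finite R"
  shows "card R = 6 * card S"
proof -
  have Sp: "S \<subseteq> placements 2 3" and pw: "pairwise disjnt S" and U: "\<Union>S = R"
    using S by (auto simp: tilings_def)
  have "card R = sum card S" unfolding U[symmetric]
    using card_Union_disjoint[OF pw] block_card Sp by blast
  also have "\<dots> = sum (\<lambda>_. 6) S" using block_card Sp by (intro sum.cong) auto
  finally show ?thesis by simp
qed

lemma T_val: "T23_7 N = (if 7 dvd N then 3 ^ (N div 7) else 0)"
proof -
  have d: "7 dvd 6 * N \<longleftrightarrow> 7 dvd N" by presburger
  show ?thesis
  proof (cases "7 dvd N")
    case False then show ?thesis using d by (simp add: T23_7_def)
  next
    case True
    then obtain k where N: "N = 7 * k" by blast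
    have n: "6 * N div 7 = 6 * k" using N by simp
    define R where "R = sky 0 (6*k) [0,0,0,0,0,0,0]"
    have "{S. is_tiling 2 3 7 (6 * k) S \<and> card S = N} = tilings R"
    proof
      show "{S. is_tiling 2 3 7 (6 * k) S \<and> card S = N} \<subseteq> tilings R"
        unfolding is_tiling_def tilings_def R_def rect_sky by auto
      show "tilings R \<subseteq> {S. is_tiling 2 3 7 (6 * k) S \<and> card S = N}"
      proof
        fix S assume S: "S \<in> tilings R"
        have "card R = 6 * card S" using tiling_card[OF S] sky_finite R_def by simp
        moreover have "card R = 42 * k" unfolding R_def rect_sky[symmetric] by simp
        ultimately have "card S = N" using N by simp
        then show "S \<in> {S. is_tiling 2 3 7 (6 * k) S \<and> card S = N}"
          using S unfolding is_tiling_def tilings_def R_def rect_sky by auto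
      qed
    qed
    then have "T23_7 N = F 0 (0 + 6*k) [0,0,0,0,0,0,0]"
      using True d n unfolding T23_7_def num_tilings_def F_def R_def by simp
    then show ?thesis using flat_pow[of 0 k] N by simp
  qed
qed

theorem mainTheorem10:
  shows "Abs_fps (\<lambda>N. of_nat (T23_7 N)) = (1 / (1 - 3 * fps_X ^ 7) :: rat fps)"
proof -
  define A :: "rat fps" where "A = Abs_fps (\<lambda>N. of_nat (T23_7 N))"
  have c: "fps_nth A N = (if 7 dvd N then 3 ^ (N div 7) else 0)" for N
    unfolding A_def by (simp add: T_val)
  have "(1 - 3 * fps_X ^ 7) * A = 1"
  proof (rule fps_ext)
    fix N
    have e: "fps_nth ((1 - 3 * fps_X ^ 7) * A) N = fps_nth A N - 3 * fps_nth (fps_X ^ 7 * A) N"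
    proof -
      have "(1 - 3 * fps_X ^ 7) * A = A - fps_const 3 * (fps_X ^ 7 * A)"
        by (simp add: algebra_simps fps_numeral_fps_const)
      then show ?thesis by simp
    qed
    show "fps_nth ((1 - 3 * fps_X ^ 7) * A) N = fps_nth (1 :: rat fps) N"
    proof (cases "N < 7")
      case True
      then show ?thesis unfolding e fps_X_power_mult_nth c by (cases "N = 0") auto
    next
      case False
      then obtain M where M: "N = M + 7" by (metis add.commute le_Suc_ex not_less)
      have "7 dvd N \<longleftrightarrow> 7 dvd M" using M by presburger
      moreover have "7 dvd M \<Longrightarrow> N div 7 = Suc (M div 7)" using M by auto
      ultimately show ?thesis unfolding e fps_X_power_mult_nth c using M by auto
    qed
  qed
  then have "inverse (1 - 3 * fps_X ^ 7) = A" by (rule fps_inverse_unique)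
  moreover have "(1 :: rat fps) / (1 - 3 * fps_X ^ 7) = inverse (1 - 3 * fps_X ^ 7)"
    by (subst fps_divide_unit) auto
  ultimately show ?thesis unfolding A_def by simp
qed

end
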